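(* Let $(M,\mathcal{H},\langle\cdot,\cdot\rangle)$ be a quaternionic contact manifold of dimension $4n+3$, and let $\{X_1,\dots,X_{4n},V_1,V_2,V_3\}$ be a local $g$-orthonormal frame such that $\{X_1,\dots,X_{4n}\}$ is an $Sp(n)Sp(1)$-frame and $V_1,V_2,V_3$ are the Reeb vector fields; write $X_{4n+i}:=V_i$ and let $\{\theta_1,\dots,\theta_{4n+3}\}$ be the dual coframe. Then the intrinsic sublaplacian (the sublaplacian associated with the Popp measure) is locally $$\Delta_{sub}=-\sum_{\alpha=1}^{4n}\Big(X_\alpha^2+\Big(\sum_{a=1}^{4n+3}c^a_{a\alpha}\Big)X_\alpha\Big),\qquad c^a_{a\alpha}:=\theta_a([X_a,X_\alpha]).$$
   Context: A quaternionic contact (qc) manifold $(M,\mathcal{H},\langle\cdot,\cdot\rangle)$ is a connected orientable manifold of dimension $4n+3$ with a corank-3 distribution $\mathcal{H}$ and a smooth fiberwise inner product on $\mathcal{H}$ such that locally $\mathcal{H}=\bigcap_{i=1}^3\ker\eta_i$ for 1-forms $\eta_i$, and there are almost complex structures $I_1,I_2,I_3$ on $\mathcal{H}$ with $I_i^2=I_1I_2I_3=-\mathrm{Id}$ and $2\langle I_iX,Y\rangle=d\eta_i(X,Y)$ for horizontal $X,Y$. Reeb vector fields: $\eta_i(V_j)=\delta_{ij}$, $(V_i\lrcorner d\eta_j)|_{\mathcal{H}}=-(V_j\lrcorner d\eta_i)|_{\mathcal{H}}$ (assumed to exist if $n=1$). $g=\langle\cdot,\cdot\rangle\oplus(\eta_1^2+\eta_2^2+\eta_3^2)$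 with $\mathcal{H}\perp\mathrm{span}\{V_i\}$. An $Sp(n)Sp(1)$-frame is an orthonormal frame of $\mathcal{H}$ with $I_iX_{4k+1}=X_{4k+i+1}$. For a smooth measure $\mu$, $\mathrm{div}_\mu X$ is defined by $\mathcal{L}_X\mu=(\mathrm{div}_\mu X)\mu$, and the sublaplacian is $\Delta^\mu_{sub}f=-\mathrm{div}_\mu(\nabla_{\mathcal{H}}f)$, $\nabla_{\mathcal{H}}$ the horizontal gradient. The Popp measure in such a frame is $\frac{1}{\sqrt{\det B}}\theta_1\wedge\cdots\wedge\theta_{4n+3}$ with $B_{ij}=\sum_{\alpha,\beta}\eta_i([X_\alpha,X_\beta])\eta_j([X_\alpha,X_\beta])$; the intrinsic sublaplacian is $\Delta^\mu_{sub}$ with $\mu$ the Popp measure. *)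

theory Defs
  imports "HOL-Analysis.Analysis"
begin

text \<open>Local (chart) setting: a frame domain is an open set U of real^'m, CARD('m) = 4n+3.
  Tangent vectors are elements of real^'m; a 1-form is represented by a covector field
  eta :: real^'m => real^'m, acting by eta x \<bullet> v.\<close>

fun Ck :: "nat \<Rightarrow> 'a::real_normed_vector set \<Rightarrow> ('a \<Rightarrow> 'b::real_normed_vector) \<Rightarrow> bool" where
  "Ck 0 U f = continuous_on U f"
| "Ck (Suc k) U f = ((\<forall>x\<in>U. f differentiable (at x)) \<and>
                      (\<forall>v. Ck k U (\<lambda>x. frechet_derivative f (at x) v)))"

definition smooth_on :: "'a::real_normed_vector set \<Rightarrow> ('a \<Rightarrow> 'b::real_normed_vector) \<Rightarrow> bool" where
  "smooth_on U f \<longleftrightarrow> (\<forall>k. Ck k U f)"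

definition vf_apply :: "('a::real_normed_vector \<Rightarrow> 'a) \<Rightarrow> ('a \<Rightarrow> 'b::real_normed_vector) \<Rightarrow> 'a \<Rightarrow> 'b" where
  "vf_apply X f x = frechet_derivative f (at x) (X x)"

definition lie_bracket :: "('a::real_normed_vector \<Rightarrow> 'a) \<Rightarrow> ('a \<Rightarrow> 'a) \<Rightarrow> 'a \<Rightarrow> 'a" where
  "lie_bracket X Y x = frechet_derivative Y (at x) (X x) - frechet_derivative X (at x) (Y x)"

text \<open>Exterior derivative of a 1-form eta at x evaluated on tangent vectors v, w:
  d eta(v,w) = (D eta(v)) . w - (D eta(w)) . v, i.e. d eta(X,Y) = X eta(Y) - Y eta(X) - eta([X,Y]).\<close>
definition d_form :: "(real^'n::finite \<Rightarrow> real^'n) \<Rightarrow> real^'n \<Rightarrow> real^'n \<Rightarrow> real^'n \<Rightarrow> real" where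
  "d_form eta x v w = frechet_derivative eta (at x) v \<bullet> w - frechet_derivative eta (at x) w \<bullet> v"

definition horiz :: "(nat \<Rightarrow> real^'n::finite \<Rightarrow> real^'n) \<Rightarrow> real^'n \<Rightarrow> (real^'n) set" where
  "horiz eta x = {v. \<forall>i\<in>{1,2,3::nat}. eta i x \<bullet> v = 0}"

definition hgrad :: "(nat \<Rightarrow> real^'n::finite \<Rightarrow> real^'n) \<Rightarrow> (real^'n \<Rightarrow> real^'n \<Rightarrow> real^'n \<Rightarrow> real)
     \<Rightarrow> (real^'n \<Rightarrow> real) \<Rightarrow> real^'n \<Rightarrow> real^'n" where
  "hgrad eta ip f x = (THE w. w \<in> horiz eta x \<and>
       (\<forall>v\<in>horiz eta x. ip x w v = frechet_derivative f (at x) v))"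

text \<open>Divergence with respect to the smooth measure rho(x) dx (rho > 0 a density w.r.t. the
  coordinate volume): this is the coordinate expression of L_Y mu = (div_mu Y) mu.\<close>
definition divergence :: "(real^'n::finite \<Rightarrow> real) \<Rightarrow> (real^'n \<Rightarrow> real^'n) \<Rightarrow> real^'n \<Rightarrow> real" where
  "divergence rho Y x = (1 / rho x) *
      (\<Sum>i\<in>UNIV. frechet_derivative (\<lambda>y. rho y * Y y $ i) (at x) (axis i 1))"

definition sublaplacian :: "(real^'n::finite \<Rightarrow> real) \<Rightarrow> (nat \<Rightarrow> real^'n \<Rightarrow> real^'n)
     \<Rightarrow> (real^'n \<Rightarrow> real^'n \<Rightarrow> real^'n \<Rightarrow> real) \<Rightarrow> (real^'n \<Rightarrow> real) \<Rightarrow> real^'n \<Rightarrow> real" where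
  "sublaplacian rho eta ip f x = - divergence rho (hgrad eta ip f) x"

definition popp_B :: "nat \<Rightarrow> (nat \<Rightarrow> real^'n::finite \<Rightarrow> real^'n) \<Rightarrow> (nat \<Rightarrow> real^'n \<Rightarrow> real^'n)
     \<Rightarrow> real^'n \<Rightarrow> nat \<Rightarrow> nat \<Rightarrow> real" where
  "popp_B n eta X x i j = (\<Sum>\<alpha>\<in>{1..4*n}. \<Sum>\<beta>\<in>{1..4*n}.
      (eta i x \<bullet> lie_bracket (X \<alpha>) (X \<beta>) x) * (eta j x \<bullet> lie_bracket (X \<alpha>) (X \<beta>) x))"

definition det3 :: "(nat \<Rightarrow> nat \<Rightarrow> real) \<Rightarrow> real" where
  "det3 B = B 1 1 * (B 2 2 * B 3 3 - B 2 3 * B 3 2)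
          - B 1 2 * (B 2 1 * B 3 3 - B 2 3 * B 3 1)
          + B 1 3 * (B 2 1 * B 3 2 - B 2 2 * B 3 1)"

text \<open>Density (w.r.t. coordinate Lebesgue measure) of the Popp measure
  (1/sqrt(det B)) theta_1 \<and> ... \<and> theta_{4n+3}; the coordinate expression of
  theta_1 \<and>...\<and> theta_N is det(theta_a(e_i)) dx, where iota enumerates the coordinates
  ('m) by 1..N; as a measure we take the absolute value.\<close>
definition popp_density :: "nat \<Rightarrow> ('n::finite \<Rightarrow> nat) \<Rightarrow> (nat \<Rightarrow> real^'n \<Rightarrow> real^'n)
     \<Rightarrow> (nat \<Rightarrow> real^'n \<Rightarrow> real^'n) \<Rightarrow> (nat \<Rightarrow> real^'n \<Rightarrow> real^'n) \<Rightarrow> real^'n \<Rightarrow> real" where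
  "popp_density n iota theta eta X x =
     \<bar>det (\<chi> r c. theta (iota r) x $ c)\<bar> / sqrt (det3 (popp_B n eta X x))"

end

theory Submission
  imports Defs
begin
lemma det_has_derivative:
  fixes M :: "'a::real_normed_vector \<Rightarrow> real^'n^'n"
  assumes d: "\<And>i j. ((\<lambda>y. M y $ i $ j) has_derivative D i j) (at x)"
  shows "((\<lambda>y. det (M y)) has_derivative
     (\<lambda>v. \<Sum>k\<in>UNIV. det (\<chi> i. if i = k then (\<chi> j. D i j v) else M x $ i))) (at x)"
proof -
  have h: "((\<lambda>y. det (M y)) has_derivative
     (\<lambda>v. \<Sum>p\<in>{p. p permutes (UNIV::'n set)}. of_int (sign p) *
          (\<Sum>k\<in>UNIV. D k (p k) v * (\<Prod>j\<in>UNIV - {k}. M x $ j $ p j)))) (at x)"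
    unfolding det_def
    by (intro has_derivative_sum has_derivative_mult_right has_derivative_prod d)
  have e: "(\<Sum>p\<in>{p. p permutes (UNIV::'n set)}. of_int (sign p) *
          (\<Sum>k\<in>UNIV. D k (p k) v * (\<Prod>j\<in>UNIV - {k}. M x $ j $ p j)))
      = (\<Sum>k\<in>UNIV. det (\<chi> i. if i = k then (\<chi> j. D i j v) else M x $ i))" for v
  proof -
    have "(\<Sum>p\<in>{p. p permutes (UNIV::'n set)}. of_int (sign p) *
          (\<Sum>k\<in>UNIV. D k (p k) v * (\<Prod>j\<in>UNIV - {k}. M x $ j $ p j)))
      = (\<Sum>k\<in>UNIV. \<Sum>p\<in>{p. p permutes (UNIV::'n set)}. of_int (sign p) *
          (D k (p k) v * (\<Prod>j\<in>UNIV - {k}. M x $ j $ p j)))"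
      by (simp add: sum_distrib_left sum.swap[where A="{p. p permutes (UNIV::'n set)}"])
    also have "\<dots> = (\<Sum>k\<in>UNIV. det (\<chi> i. if i = k then (\<chi> j. D i j v) else M x $ i))"
    proof (rule sum.cong[OF refl])
      fix k :: 'n
      have "(\<Prod>i\<in>UNIV. (\<chi> i. if i = k then (\<chi> j. D i j v) else M x $ i) $ i $ p i)
           = D k (p k) v * (\<Prod>j\<in>UNIV - {k}. M x $ j $ p j)" for p
      proof -
        have "(\<Prod>i\<in>UNIV. (\<chi> i. if i = k then (\<chi> j. D i j v) else M x $ i) $ i $ p i)
           = (\<chi> i. if i = k then (\<chi> j. D i j v) else M x $ i) $ k $ p k *
             (\<Prod>i\<in>UNIV - {k}. (\<chi> i. if i = k then (\<chi> j. D i j v) else M x $ i) $ i $ p i)"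
          by (rule prod.remove) auto
        also have "\<dots> = D k (p k) v * (\<Prod>j\<in>UNIV - {k}. M x $ j $ p j)"
          by (auto intro!: prod.cong)
        finally show ?thesis .
      qed
      then show "(\<Sum>p\<in>{p. p permutes (UNIV::'n set)}. of_int (sign p) *
          (D k (p k) v * (\<Prod>j\<in>UNIV - {k}. M x $ j $ p j)))
         = det (\<chi> i. if i = k then (\<chi> j. D i j v) else M x $ i)"
        unfolding det_def by simp
    qed
    finally show ?thesis .
  qed
  show ?thesis using h unfolding e .
qed

lemma det_row_replace:
  fixes A N :: "real^'n^'n"
  assumes "N ** A = mat 1"
  shows "det (\<chi> i. if i = k then h else A $ i) = (h \<bullet> column k N) * det A"
proof -
  define c where "c = (\<chi> s. h \<bullet> column s N)"
  have hs: "(\<Sum>s\<in>UNIV. c$s *s row s A) = h"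
  proof -
    have "(\<Sum>s\<in>UNIV. c$s *s row s A) $ l = h $ l" for l
    proof -
      have "(\<Sum>s\<in>UNIV. c$s *s row s A) $ l = (\<Sum>s\<in>UNIV. c$s * A $ s $ l)"
        by (simp add: sum_component row_def)
      also have "\<dots> = (\<Sum>s\<in>UNIV. \<Sum>t\<in>UNIV. h $ t * N $ t $ s * A $ s $ l)"
        by (simp add: c_def inner_vec_def column_def sum_distrib_right)
      also have "\<dots> = (\<Sum>t\<in>UNIV. h $ t * (\<Sum>s\<in>UNIV. N $ t $ s * A $ s $ l))"
        by (subst sum.swap) (simp add: sum_distrib_left mult.assoc)
      also have "\<dots> = (\<Sum>t\<in>UNIV. h $ t * (N ** A) $ t $ l)"
        by (simp add: matrix_matrix_mult_def)
      also have "\<dots> = h $ l" using assms by (simp add: mat_def if_distrib cong: if_cong)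
      finally show ?thesis .
    qed
    then show ?thesis by (simp add: vec_eq_iff)
  qed
  have "det (\<chi> i. if i = k then h else A $ i) = det (\<chi> i. if i = k then (\<Sum>s\<in>UNIV. c$s *s row s A) else row i A)"
    unfolding hs by (rule arg_cong[where f=det]) (simp add: row_def vec_eq_iff)
  also have "\<dots> = c$k * det A" by (rule cramer_lemma_transpose)
  finally show ?thesis by (simp add: c_def)
qed


lemma smooth_diff: "smooth_on U F \<Longrightarrow> y \<in> U \<Longrightarrow> F differentiable (at y)"
  unfolding smooth_on_def by (metis Ck.simps(2))

lemma smooth_diff2: "smooth_on U F \<Longrightarrow> y \<in> U \<Longrightarrow> (\<lambda>z. frechet_derivative F (at z) v) differentiable (at y)"
  unfolding smooth_on_def by (metis Ck.simps(2) numeral_2_eq_2)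

lemma horiz_add: "u \<in> horiz e y \<Longrightarrow> v \<in> horiz e y \<Longrightarrow> u + v \<in> horiz e y"
  by (simp add: horiz_def inner_add_right)
lemma horiz_scale: "u \<in> horiz e y \<Longrightarrow> c *\<^sub>R u \<in> horiz e y"
  by (simp add: horiz_def)
lemma horiz_zero: "0 \<in> horiz e y"
  by (simp add: horiz_def)
lemma horiz_diff: "u \<in> horiz e y \<Longrightarrow> v \<in> horiz e y \<Longrightarrow> u - v \<in> horiz e y"
  by (simp add: horiz_def inner_diff_right)
lemma horiz_sum: "(\<And>k. k \<in> K \<Longrightarrow> u k \<in> horiz e y) \<Longrightarrow> (\<Sum>k\<in>K. u k) \<in> horiz e y"
  by (induction K rule: infinite_finite_induct) (auto simp: horiz_zero horiz_add)


lemma zero_deriv: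
  assumes "open U" "y \<in> U" "\<And>z. z \<in> U \<Longrightarrow> F z = c" "(F has_derivative F') (at y)"
  shows "F' h = 0"
proof -
  have "((\<lambda>z. c) has_derivative (\<lambda>h. 0)) (at y)" by simp
  then have "(F has_derivative (\<lambda>h. 0)) (at y)"
    by (rule has_derivative_transform_within_open[OF _ assms(1,2)]) (simp add: assms(3))
  then show ?thesis using has_derivative_unique[OF assms(4)] by metis
qed


lemma bexp: "(\<Sum>i\<in>UNIV. (x$i) *\<^sub>R axis i (1::real)) = (x :: real^'n)"
  using basis_expansion[of x] by (simp add: scalar_mult_eq_scaleR)

lemma lin_bexp: "linear L \<Longrightarrow> L (x::real^'n) = (\<Sum>i\<in>UNIV. x$i *\<^sub>R L (axis i 1))"
proof -
  assume L: "linear L"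
  have "L x = L (\<Sum>i\<in>UNIV. (x$i) *\<^sub>R axis i (1::real))" by (simp add: bexp)
  also have "\<dots> = (\<Sum>i\<in>UNIV. x$i *\<^sub>R L (axis i 1))" using L by (simp add: linear_sum linear_scale)
  finally show ?thesis .
qed

lemma abs_deriv: "t \<noteq> (0::real) \<Longrightarrow> (abs has_real_derivative sgn t) (at t)"
proof -
  assume t: "t \<noteq> 0"
  show ?thesis
  proof (cases "t > 0")
    case True
    have "((\<lambda>x. x) has_real_derivative 1) (at t)" by simp
    then have "(abs has_real_derivative 1) (at t)"
      by (rule has_field_derivative_transform_within_open[where S="{0<..}"]) (use True in auto)
    then show ?thesis using True by simp
  next
    case False
    then have tn: "t < 0" using t by simp
    have "((\<lambda>x. - x) has_real_derivative -1) (at t)" by (auto intro!: derivative_eq_intros)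
    then have "(abs has_real_derivative -1) (at t)"
      by (rule has_field_derivative_transform_within_open[where S="{..<0}"]) (use tn in auto)
    then show ?thesis using tn by simp
  qed
qed

locale qcl =
  fixes n :: nat
    and U :: "(real^'m::finite) set"
    and iota :: "'m \<Rightarrow> nat"
    and eta :: "nat \<Rightarrow> real^'m \<Rightarrow> real^'m"
    and ip :: "real^'m \<Rightarrow> real^'m \<Rightarrow> real^'m \<Rightarrow> real"
    and I :: "nat \<Rightarrow> real^'m \<Rightarrow> real^'m \<Rightarrow> real^'m"
    and X :: "nat \<Rightarrow> real^'m \<Rightarrow> real^'m"
    and theta :: "nat \<Rightarrow> real^'m \<Rightarrow> real^'m"
    and f :: "real^'m \<Rightarrow> real"
  assumes n_pos: "n \<ge> 1"
    and dim: "CARD('m) = 4*n+3"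
    and iota: "bij_betw iota UNIV {1..4*n+3}"
    and U_open: "open U"
    and eta_smooth: "\<forall>i\<in>{1,2,3}. smooth_on U (eta i)"
    and X_smooth: "\<forall>a\<in>{1..4*n+3}. smooth_on U (X a)"
    and theta_smooth: "\<forall>a\<in>{1..4*n+3}. smooth_on U (theta a)"
    and f_smooth: "smooth_on U f"
    and ip_bilin: "\<forall>x\<in>U. \<forall>u\<in>horiz eta x. \<forall>v\<in>horiz eta x. \<forall>w\<in>horiz eta x. \<forall>a b::real.
           ip x (a *\<^sub>R u + b *\<^sub>R v) w = a * ip x u w + b * ip x v w"
    and ip_sym: "\<forall>x\<in>U. \<forall>v\<in>horiz eta x. \<forall>w\<in>horiz eta x. ip x v w = ip x w v"
    and ip_pos: "\<forall>x\<in>U. \<forall>v\<in>horiz eta x. v \<noteq> 0 \<longrightarrow> ip x v v > 0"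
    and I_lin: "\<forall>x\<in>U. \<forall>i\<in>{1,2,3}. \<forall>v\<in>horiz eta x. \<forall>w\<in>horiz eta x. \<forall>a b::real.
           I i x (a *\<^sub>R v + b *\<^sub>R w) = a *\<^sub>R I i x v + b *\<^sub>R I i x w"
    and I_horiz: "\<forall>x\<in>U. \<forall>i\<in>{1,2,3}. \<forall>v\<in>horiz eta x. I i x v \<in> horiz eta x"
    and I_sq: "\<forall>x\<in>U. \<forall>i\<in>{1,2,3}. \<forall>v\<in>horiz eta x. I i x (I i x v) = - v"
    and I_123: "\<forall>x\<in>U. \<forall>v\<in>horiz eta x. I 1 x (I 2 x (I 3 x v)) = - v"
    and qc_compat: "\<forall>x\<in>U. \<forall>i\<in>{1,2,3}. \<forall>v\<in>horiz eta x. \<forall>w\<in>horiz eta x.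
           2 * ip x (I i x v) w = d_form (eta i) x v w"
    (* X_{4n+i} = V_i are the Reeb vector fields *)
    and reeb_dual: "\<forall>x\<in>U. \<forall>i\<in>{1,2,3}. \<forall>j\<in>{1,2,3}.
           eta i x \<bullet> X (4*n+j) x = (if i = j then 1 else 0)"
    and reeb_skew: "\<forall>x\<in>U. \<forall>i\<in>{1,2,3}. \<forall>j\<in>{1,2,3}. \<forall>v\<in>horiz eta x.
           d_form (eta j) x (X (4*n+i) x) v = - d_form (eta i) x (X (4*n+j) x) v"
    (* X_1..X_{4n} is an Sp(n)Sp(1)-frame of H *)
    and X_horiz: "\<forall>x\<in>U. \<forall>\<alpha>\<in>{1..4*n}. X \<alpha> x \<in> horiz eta x"
    and X_orth: "\<forall>x\<in>U. \<forall>\<alpha>\<in>{1..4*n}. \<forall>\<beta>\<in>{1..4*n}.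
           ip x (X \<alpha> x) (X \<beta> x) = (if \<alpha> = \<beta> then 1 else 0)"
    and X_sp: "\<forall>x\<in>U. \<forall>k<n. \<forall>i\<in>{1,2,3}. I i x (X (4*k+1) x) = X (4*k+i+1) x"
    and theta_dual: "\<forall>x\<in>U. \<forall>a\<in>{1..4*n+3}. \<forall>b\<in>{1..4*n+3}.
           theta a x \<bullet> X b x = (if a = b then 1 else 0)"

context qcl
begin

lemma X_d: "a \<in> {1..4*n+3} \<Longrightarrow> y \<in> U \<Longrightarrow> X a differentiable (at y)"
  using X_smooth smooth_diff by blast
lemma th_d: "a \<in> {1..4*n+3} \<Longrightarrow> y \<in> U \<Longrightarrow> theta a differentiable (at y)"
  using theta_smooth smooth_diff by blast
lemma eta_d: "i \<in> {1,2,3} \<Longrightarrow> y \<in> U \<Longrightarrow> eta i differentiable (at y)"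
  using eta_smooth smooth_diff by blast
lemma f_d: "y \<in> U \<Longrightarrow> f differentiable (at y)"
  using f_smooth smooth_diff by blast

lemma iota_eq: "iota r = iota c \<longleftrightarrow> r = c"
  using iota by (auto simp: bij_betw_def inj_on_def)
lemma iota_in: "iota r \<in> {1..4*n+3}"
  using iota by (auto simp: bij_betw_def)

lemma Th_Xm: "y \<in> U \<Longrightarrow> (\<chi> r c. theta (iota r) y $ c) ** (\<chi> r c. X (iota c) y $ r) = mat 1"
proof -
  assume y: "y \<in> U"
  have "(\<Sum>k\<in>UNIV. theta (iota r) y $ k * X (iota c) y $ k) = (if r = c then 1 else 0)" for r c
  proof -
    have "theta (iota r) y \<bullet> X (iota c) y = (if r = c then 1 else 0)"
      using theta_dual y iota_in[of r] iota_in[of c] iota_eq[of r c] by simp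
    then show ?thesis by (simp add: inner_vec_def)
  qed
  then show ?thesis by (simp add: matrix_matrix_mult_def mat_def vec_eq_iff)
qed

lemma XT: "y \<in> U \<Longrightarrow> (\<Sum>a\<in>{1..4*n+3}. X a y $ i * theta a y $ k) = (if i = k then 1 else 0)"
proof -
  assume y: "y \<in> U"
  have "(\<chi> r c. X (iota c) y $ r) ** (\<chi> r c. theta (iota r) y $ c) = mat 1"
    using Th_Xm[OF y] matrix_left_right_inverse by blast
  then have "(\<Sum>r\<in>UNIV. X (iota r) y $ i * theta (iota r) y $ k) = (if i = k then 1 else 0)"
    by (simp add: matrix_matrix_mult_def mat_def vec_eq_iff)
  then show ?thesis
    using sum.reindex_bij_betw[OF iota, of "\<lambda>a. X a y $ i * theta a y $ k"] by simp
qed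

lemma expand: "y \<in> U \<Longrightarrow> (\<Sum>a\<in>{1..4*n+3}. (theta a y \<bullet> v) *\<^sub>R X a y) = v"
proof -
  assume y: "y \<in> U"
  have "(\<Sum>a\<in>{1..4*n+3}. (theta a y \<bullet> v) *\<^sub>R X a y) $ i = v $ i" for i
  proof -
    have "(\<Sum>a\<in>{1..4*n+3}. (theta a y \<bullet> v) *\<^sub>R X a y) $ i
        = (\<Sum>a\<in>{1..4*n+3}. \<Sum>k\<in>UNIV. v $ k * (X a y $ i * theta a y $ k))"
      by (simp add: sum_component inner_vec_def sum_distrib_left mult_ac)
    also have "\<dots> = (\<Sum>k\<in>UNIV. v $ k * (\<Sum>a\<in>{1..4*n+3}. X a y $ i * theta a y $ k))"
      by (subst sum.swap) (simp add: sum_distrib_left)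
    also have "\<dots> = (\<Sum>k\<in>UNIV. if i = k then v $ k else 0)"
      using XT[OF y, of i] by (intro sum.cong) auto
    also have "\<dots> = v $ i" by simp
    finally show ?thesis .
  qed
  then show ?thesis by (simp add: vec_eq_iff)
qed

lemma theta_reeb_h: "y \<in> U \<Longrightarrow> v \<in> horiz eta y \<Longrightarrow> j \<in> {1,2,3} \<Longrightarrow> theta (4*n+j) y \<bullet> v = 0"
proof -
  assume y: "y \<in> U" and v: "v \<in> horiz eta y" and j: "j \<in> {1,2,3}"
  have "0 = eta j y \<bullet> v" using v j by (auto simp: horiz_def)
  also have "\<dots> = eta j y \<bullet> (\<Sum>a\<in>{1..4*n+3}. (theta a y \<bullet> v) *\<^sub>R X a y)"
    using expand[OF y] by simp
  also have "\<dots> = (\<Sum>a\<in>{1..4*n+3}. (theta a y \<bullet> v) * (eta j y \<bullet> X a y))"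
    by (simp add: inner_sum_right)
  also have "\<dots> = (\<Sum>a\<in>{1..4*n+3}. if a = 4*n+j then theta a y \<bullet> v else 0)"
  proof (rule sum.cong[OF refl])
    fix a assume a: "a \<in> {1..4*n+3}"
    show "(theta a y \<bullet> v) * (eta j y \<bullet> X a y) = (if a = 4*n+j then theta a y \<bullet> v else 0)"
    proof (cases "a \<le> 4*n")
      case True
      then have "X a y \<in> horiz eta y" using X_horiz y a by auto
      then have "eta j y \<bullet> X a y = 0" using j by (auto simp: horiz_def)
      then show ?thesis using True j by auto
    next
      case False
      then obtain i where i: "i \<in> {1,2,3}" "a = 4*n+i" using a
        by (intro that[of "a - 4*n"]) auto
      then show ?thesis using reeb_dual y j by auto
    qed
  qed
  also have "\<dots> = theta (4*n+j) y \<bullet> v" using j by auto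
  finally show ?thesis by simp
qed

lemma expand_h: "y \<in> U \<Longrightarrow> v \<in> horiz eta y \<Longrightarrow> (\<Sum>\<alpha>\<in>{1..4*n}. (theta \<alpha> y \<bullet> v) *\<^sub>R X \<alpha> y) = v"
proof -
  assume y: "y \<in> U" and v: "v \<in> horiz eta y"
  have "(\<Sum>\<alpha>\<in>{1..4*n}. (theta \<alpha> y \<bullet> v) *\<^sub>R X \<alpha> y) = (\<Sum>a\<in>{1..4*n+3}. (theta a y \<bullet> v) *\<^sub>R X a y)"
  proof (rule sum.mono_neutral_left)
    show "\<forall>i\<in>{1..4*n+3} - {1..4*n}. (theta i y \<bullet> v) *\<^sub>R X i y = 0"
    proof
      fix a assume a: "a \<in> {1..4*n+3} - {1..4*n}"
      then obtain j where j: "j \<in> {1,2,3}" "a = 4*n+j"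
        by (intro that[of "a - 4*n"]) auto
      then show "(theta a y \<bullet> v) *\<^sub>R X a y = 0" using theta_reeb_h[OF y v j(1)] by simp
    qed
  qed auto
  then show ?thesis using expand[OF y] by simp
qed

end

context qcl
begin

abbreviation H where "H y \<equiv> horiz eta y"

lemma Xh: "y \<in> U \<Longrightarrow> \<alpha> \<in> {1..4*n} \<Longrightarrow> X \<alpha> y \<in> H y"
  using X_horiz by blast

lemma ip_lin: "y \<in> U \<Longrightarrow> u \<in> H y \<Longrightarrow> v \<in> H y \<Longrightarrow> w \<in> H y \<Longrightarrow>
   ip y (a *\<^sub>R u + b *\<^sub>R v) w = a * ip y u w + b * ip y v w"
  using ip_bilin by blast

lemma ip_scale: "y \<in> U \<Longrightarrow> u \<in> H y \<Longrightarrow> w \<in> H y \<Longrightarrow> ip y (a *\<^sub>R u) w = a * ip y u w"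
  using ip_lin[of y u u w a 0] by simp

lemma ip_add: "y \<in> U \<Longrightarrow> u \<in> H y \<Longrightarrow> v \<in> H y \<Longrightarrow> w \<in> H y \<Longrightarrow> ip y (u + v) w = ip y u w + ip y v w"
  using ip_lin[of y u v w 1 1] by simp

lemma ip_diff: "y \<in> U \<Longrightarrow> u \<in> H y \<Longrightarrow> v \<in> H y \<Longrightarrow> w \<in> H y \<Longrightarrow> ip y (u - v) w = ip y u w - ip y v w"
  using ip_lin[of y u v w 1 "-1"] by simp

lemma ip_neg: "y \<in> U \<Longrightarrow> u \<in> H y \<Longrightarrow> w \<in> H y \<Longrightarrow> ip y (- u) w = - ip y u w"
  using ip_scale[of y u w "-1"] by simp

lemma ip_zero: "y \<in> U \<Longrightarrow> w \<in> H y \<Longrightarrow> ip y 0 w = 0"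
  by (metis ip_scale horiz_zero scale_zero_left mult_zero_left)

lemma sy: "y \<in> U \<Longrightarrow> v \<in> H y \<Longrightarrow> w \<in> H y \<Longrightarrow> ip y v w = ip y w v"
  using ip_sym by blast

lemma ip_sum: assumes y: "y \<in> U" and K: "finite K" and u: "\<And>k. k \<in> K \<Longrightarrow> u k \<in> H y" and w: "w \<in> H y"
  shows "ip y (\<Sum>k\<in>K. u k) w = (\<Sum>k\<in>K. ip y (u k) w)"
  using K u
proof (induction K rule: finite_induct)
  case empty
  then show ?case using ip_zero y w by simp
next
  case (insert k F)
  have "ip y (\<Sum>k\<in>insert k F. u k) w = ip y (u k + (\<Sum>k\<in>F. u k)) w"
    using insert by simp
  also have "\<dots> = ip y (u k) w + ip y (\<Sum>k\<in>F. u k) w"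
    using insert y w by (intro ip_add) (auto intro!: horiz_sum)
  finally show ?case using insert by simp
qed

lemma ip_sum_scale: "y \<in> U \<Longrightarrow> finite K \<Longrightarrow> (\<And>k. k \<in> K \<Longrightarrow> u k \<in> H y) \<Longrightarrow> w \<in> H y \<Longrightarrow>
   ip y (\<Sum>k\<in>K. c k *\<^sub>R u k) w = (\<Sum>k\<in>K. c k * ip y (u k) w)"
proof -
  assume y: "y \<in> U" and K: "finite K" and u: "\<And>k. k \<in> K \<Longrightarrow> u k \<in> H y" and w: "w \<in> H y"
  have "ip y (\<Sum>k\<in>K. c k *\<^sub>R u k) w = (\<Sum>k\<in>K. ip y (c k *\<^sub>R u k) w)"
    by (rule ip_sum[OF y K horiz_scale[OF u] w])
  also have "\<dots> = (\<Sum>k\<in>K. c k * ip y (u k) w)"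
    by (intro sum.cong refl ip_scale[OF y u w])
  finally show ?thesis .
qed

lemma coef: "y \<in> U \<Longrightarrow> v \<in> H y \<Longrightarrow> \<beta> \<in> {1..4*n} \<Longrightarrow> ip y v (X \<beta> y) = theta \<beta> y \<bullet> v"
proof -
  assume y: "y \<in> U" and v: "v \<in> H y" and b: "\<beta> \<in> {1..4*n}"
  have "ip y v (X \<beta> y) = ip y (\<Sum>\<alpha>\<in>{1..4*n}. (theta \<alpha> y \<bullet> v) *\<^sub>R X \<alpha> y) (X \<beta> y)"
    using expand_h[OF y v] by simp
  also have "\<dots> = (\<Sum>\<alpha>\<in>{1..4*n}. (theta \<alpha> y \<bullet> v) * ip y (X \<alpha> y) (X \<beta> y))"
    using y b by (intro ip_sum_scale) (auto intro: Xh)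
  also have "\<dots> = (\<Sum>\<alpha>\<in>{1..4*n}. if \<alpha> = \<beta> then theta \<alpha> y \<bullet> v else 0)"
    using X_orth y b by (intro sum.cong) auto
  also have "\<dots> = theta \<beta> y \<bullet> v" using b by simp
  finally show ?thesis .
qed

lemma expand_ip: "y \<in> U \<Longrightarrow> v \<in> H y \<Longrightarrow> (\<Sum>\<alpha>\<in>{1..4*n}. ip y v (X \<alpha> y) *\<^sub>R X \<alpha> y) = v"
  using expand_h[of y v] coef[of y v] by simp

lemma parseval: "y \<in> U \<Longrightarrow> u \<in> H y \<Longrightarrow> w \<in> H y \<Longrightarrow>
   ip y u w = (\<Sum>\<alpha>\<in>{1..4*n}. ip y u (X \<alpha> y) * ip y w (X \<alpha> y))"
proof -
  assume y: "y \<in> U" and u: "u \<in> H y" and w: "w \<in> H y"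
  have "ip y u w = ip y (\<Sum>\<alpha>\<in>{1..4*n}. ip y u (X \<alpha> y) *\<^sub>R X \<alpha> y) w"
    using expand_ip[OF y u] by simp
  also have "\<dots> = (\<Sum>\<alpha>\<in>{1..4*n}. ip y u (X \<alpha> y) * ip y (X \<alpha> y) w)"
    using y w by (intro ip_sum_scale) (auto intro: Xh)
  also have "\<dots> = (\<Sum>\<alpha>\<in>{1..4*n}. ip y u (X \<alpha> y) * ip y w (X \<alpha> y))"
    by (intro sum.cong refl) (metis sy Xh y w)
  finally show ?thesis .
qed

lemma hgrad_eq: "y \<in> U \<Longrightarrow> hgrad eta ip f y = (\<Sum>\<alpha>\<in>{1..4*n}. vf_apply (X \<alpha>) f y *\<^sub>R X \<alpha> y)"
proof -
  assume y: "y \<in> U"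
  define G where "G = (\<Sum>\<alpha>\<in>{1..4*n}. vf_apply (X \<alpha>) f y *\<^sub>R X \<alpha> y)"
  define Df where "Df = frechet_derivative f (at y)"
  have lin: "linear Df" unfolding Df_def using f_d[OF y] by (rule linear_frechet_derivative)
  have GH: "G \<in> H y" unfolding G_def using y by (auto intro!: horiz_sum horiz_scale Xh)
  have Gp: "ip y G v = Df v" if v: "v \<in> H y" for v
  proof -
    have "ip y G v = (\<Sum>\<alpha>\<in>{1..4*n}. vf_apply (X \<alpha>) f y * ip y (X \<alpha> y) v)"
      unfolding G_def using y v by (intro ip_sum_scale) (auto intro: Xh)
    also have "\<dots> = (\<Sum>\<alpha>\<in>{1..4*n}. (theta \<alpha> y \<bullet> v) * Df (X \<alpha> y))"
    proof (intro sum.cong refl)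
      fix \<alpha> assume a: "\<alpha> \<in> {1..4*n}"
      have "ip y (X \<alpha> y) v = theta \<alpha> y \<bullet> v" using sy[OF y Xh[OF y a] v] coef[OF y v a] by simp
      then show "vf_apply (X \<alpha>) f y * ip y (X \<alpha> y) v = (theta \<alpha> y \<bullet> v) * Df (X \<alpha> y)"
        by (simp add: vf_apply_def Df_def)
    qed
    also have "\<dots> = Df (\<Sum>\<alpha>\<in>{1..4*n}. (theta \<alpha> y \<bullet> v) *\<^sub>R X \<alpha> y)"
      using lin by (simp add: linear_sum linear_scale)
    also have "\<dots> = Df v" using expand_h[OF y v] by simp
    finally show ?thesis .
  qed
  have uniq: "w = G" if w: "w \<in> H y" "\<forall>v\<in>H y. ip y w v = Df v" for w
  proof (rule ccontr)
    assume ne: "w \<noteq> G"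
    have d: "w - G \<in> H y" using w GH by (simp add: horiz_diff)
    have "ip y (w - G) (w - G) = ip y w (w - G) - ip y G (w - G)"
      using y w GH d by (intro ip_diff) auto
    also have "\<dots> = 0" using w Gp[OF d] d by simp
    finally have z: "ip y (w - G) (w - G) = 0" .
    have "w - G \<noteq> 0" using ne by simp
    then have "ip y (w - G) (w - G) > 0" using ip_pos y d by blast
    then show False using z by simp
  qed
  show ?thesis
    unfolding hgrad_def G_def[symmetric] Df_def[symmetric]
  proof (rule the_equality)
    show "G \<in> H y \<and> (\<forall>v\<in>H y. ip y G v = Df v)" using GH Gp by blast
  next
    fix w assume "w \<in> H y \<and> (\<forall>v\<in>H y. ip y w v = Df v)"
    then show "w = G" using uniq by blast
  qed
qed

end

context qcl
begin

lemma IH: "y \<in> U \<Longrightarrow> i \<in> {1,2,3} \<Longrightarrow> v \<in> H y \<Longrightarrow> I i y v \<in> H y"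
  using I_horiz by blast

lemma anti: "y \<in> U \<Longrightarrow> i \<in> {1,2,3} \<Longrightarrow> v \<in> H y \<Longrightarrow> w \<in> H y \<Longrightarrow>
   ip y (I i y v) w = - ip y (I i y w) v"
proof -
  assume y: "y \<in> U" and i: "i \<in> {1,2,3}" and v: "v \<in> H y" and w: "w \<in> H y"
  have "2 * ip y (I i y v) w = d_form (eta i) y v w" using qc_compat y i v w by blast
  moreover have "2 * ip y (I i y w) v = d_form (eta i) y w v" using qc_compat y i v w by blast
  moreover have "d_form (eta i) y w v = - d_form (eta i) y v w" by (simp add: d_form_def)
  ultimately show ?thesis by simp
qed

lemma Ineg: "y \<in> U \<Longrightarrow> i \<in> {1,2,3} \<Longrightarrow> v \<in> H y \<Longrightarrow> I i y (- v) = - I i y v"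
  using I_lin[rule_format, of y i v v "-1" 0] by simp

lemma iso: "y \<in> U \<Longrightarrow> i \<in> {1,2,3} \<Longrightarrow> u \<in> H y \<Longrightarrow> w \<in> H y \<Longrightarrow>
   ip y (I i y u) (I i y w) = ip y u w"
proof -
  assume y: "y \<in> U" and i: "i \<in> {1,2,3}" and u: "u \<in> H y" and w: "w \<in> H y"
  have "ip y (I i y u) (I i y w) = - ip y (I i y (I i y w)) u"
    using anti[OF y i u IH[OF y i w]] .
  also have "\<dots> = - ip y (- w) u"
  proof -
    have "I i y (I i y w) = - w" using I_sq y i w by blast
    then show ?thesis by simp
  qed
  also have "\<dots> = ip y w u" using ip_neg[OF y w u] by simp
  also have "\<dots> = ip y u w" using sy[OF y w u] .
  finally show ?thesis .
qed

lemma orth_self: "y \<in> U \<Longrightarrow> i \<in> {1,2,3} \<Longrightarrow> v \<in> H y \<Longrightarrow> ip y v (I i y v) = 0"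
proof -
  assume y: "y \<in> U" and i: "i \<in> {1,2,3}" and v: "v \<in> H y"
  have "ip y (I i y v) v = - ip y (I i y v) v" using anti[OF y i v v] .
  then have "ip y (I i y v) v = 0" by simp
  then show ?thesis using sy[OF y v IH[OF y i v]] by simp
qed

lemma I12: "y \<in> U \<Longrightarrow> v \<in> H y \<Longrightarrow> I 1 y (I 2 y v) = I 3 y v"
proof -
  assume y: "y \<in> U" and v: "v \<in> H y"
  define w where "w = - I 3 y v"
  have w: "w \<in> H y" unfolding w_def using IH[OF y _ v, of 3] horiz_scale[of "I 3 y v" eta y "-1"] by simp
  have "I 3 y w = - I 3 y (I 3 y v)" unfolding w_def using Ineg[OF y _ IH[OF y _ v], of 3 3] by simp
  also have "\<dots> = v" using I_sq y v by simp
  finally have "I 3 y w = v" .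
  then have "I 1 y (I 2 y v) = - w" using I_123 y w by metis
  then show ?thesis by (simp add: w_def)
qed

lemma ipIJ: "y \<in> U \<Longrightarrow> i \<in> {1,2,3} \<Longrightarrow> j \<in> {1,2,3} \<Longrightarrow> v \<in> H y \<Longrightarrow>
   ip y (I i y v) (I j y v) = (if i = j then ip y v v else 0)"
proof -
  assume y: "y \<in> U" and i: "i \<in> {1,2,3}" and j: "j \<in> {1,2,3}" and v: "v \<in> H y"
  have I1: "I 1 y v \<in> H y" and I2: "I 2 y v \<in> H y" and I3: "I 3 y v \<in> H y"
    using IH[OF y _ v] by auto
  have p12: "ip y (I 1 y v) (I 2 y v) = 0"
  proof -
    have "ip y (I 1 y v) (I 2 y v) = - ip y (I 1 y (I 2 y v)) v" using anti[OF y _ v I2, of 1] by simp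
    also have "\<dots> = - ip y (I 3 y v) v" using I12[OF y v] by simp
    also have "\<dots> = - ip y v (I 3 y v)" using sy[OF y I3 v] by simp
    also have "\<dots> = 0" using orth_self[OF y _ v, of 3] by simp
    finally show ?thesis .
  qed
  have p13: "ip y (I 1 y v) (I 3 y v) = 0"
  proof -
    have "ip y (I 1 y v) (I 3 y v) = ip y (I 1 y v) (I 1 y (I 2 y v))" using I12[OF y v] by simp
    also have "\<dots> = ip y v (I 2 y v)" using iso[OF y _ v I2, of 1] by simp
    also have "\<dots> = 0" using orth_self[OF y _ v, of 2] by simp
    finally show ?thesis .
  qed
  have p23: "ip y (I 2 y v) (I 3 y v) = 0"
  proof -
    have "ip y (I 2 y v) (I 3 y v) = ip y (I 2 y v) (I 1 y (I 2 y v))" using I12[OF y v] by simp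
    also have "\<dots> = 0" using orth_self[OF y _ I2, of 1] by simp
    finally show ?thesis .
  qed
  have s: "ip y (I a y v) (I b y v) = ip y (I b y v) (I a y v)" if "a \<in> {1,2,3}" "b \<in> {1,2,3}" for a b
    using sy[OF y IH[OF y that(1) v] IH[OF y that(2) v]] .
  have d: "ip y (I a y v) (I a y v) = ip y v v" if "a \<in> {1,2,3}" for a
    using iso[OF y that v v] .
  show ?thesis
    using i j p12 p13 p23 s[of 1 2] s[of 1 3] s[of 2 3] d by auto
qed

lemma bracket: "y \<in> U \<Longrightarrow> i \<in> {1,2,3} \<Longrightarrow> \<alpha> \<in> {1..4*n} \<Longrightarrow> \<beta> \<in> {1..4*n} \<Longrightarrow>
   eta i y \<bullet> lie_bracket (X \<alpha>) (X \<beta>) y = - 2 * ip y (I i y (X \<alpha> y)) (X \<beta> y)"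
proof -
  assume y: "y \<in> U" and i: "i \<in> {1,2,3}" and a: "\<alpha> \<in> {1..4*n}" and b: "\<beta> \<in> {1..4*n}"
  define De where "De = frechet_derivative (eta i) (at y)"
  define Da where "Da = frechet_derivative (X \<alpha>) (at y)"
  define Db where "Db = frechet_derivative (X \<beta>) (at y)"
  have a': "\<alpha> \<in> {1..4*n+3}" and b': "\<beta> \<in> {1..4*n+3}" using a b by auto
  have he: "(eta i has_derivative De) (at y)" unfolding De_def using eta_d[OF i y] frechet_derivative_works by blast
  have ha: "(X \<alpha> has_derivative Da) (at y)" unfolding Da_def using X_d[OF a' y] frechet_derivative_works by blast
  have hb: "(X \<beta> has_derivative Db) (at y)" unfolding Db_def using X_d[OF b' y] frechet_derivative_works by blast
  have z: "eta i z \<bullet> X \<gamma> z = 0" if "z \<in> U" "\<gamma> \<in> {1..4*n}" for z \<gamma>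
    using X_horiz that i by (auto simp: horiz_def)
  have e1: "eta i y \<bullet> Db h + De h \<bullet> X \<beta> y = 0" for h
    by (rule zero_deriv[OF U_open y _ has_derivative_inner[OF he hb], where c=0]) (use z b in auto)
  have e2: "eta i y \<bullet> Da h + De h \<bullet> X \<alpha> y = 0" for h
    by (rule zero_deriv[OF U_open y _ has_derivative_inner[OF he ha], where c=0]) (use z a in auto)
  have "2 * ip y (I i y (X \<alpha> y)) (X \<beta> y) = d_form (eta i) y (X \<alpha> y) (X \<beta> y)"
    using qc_compat y i Xh[OF y a] Xh[OF y b] by blast
  also have "\<dots> = De (X \<alpha> y) \<bullet> X \<beta> y - De (X \<beta> y) \<bullet> X \<alpha> y"
    by (simp add: d_form_def De_def)
  also have "\<dots> = - (eta i y \<bullet> lie_bracket (X \<alpha>) (X \<beta>) y)"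
    using e1[of "X \<alpha> y"] e2[of "X \<beta> y"]
    by (simp add: lie_bracket_def Da_def Db_def inner_diff_right)
  finally show ?thesis by simp
qed

lemma popp_B_val: "y \<in> U \<Longrightarrow> i \<in> {1,2,3} \<Longrightarrow> j \<in> {1,2,3} \<Longrightarrow>
   popp_B n eta X y i j = (if i = j then 16 * real n else 0)"
proof -
  assume y: "y \<in> U" and i: "i \<in> {1,2,3}" and j: "j \<in> {1,2,3}"
  have "popp_B n eta X y i j = (\<Sum>\<alpha>\<in>{1..4*n}. \<Sum>\<beta>\<in>{1..4*n}.
      4 * (ip y (I i y (X \<alpha> y)) (X \<beta> y) * ip y (I j y (X \<alpha> y)) (X \<beta> y)))"
    unfolding popp_B_def
    by (intro sum.cong refl) (simp add: bracket[OF y i] bracket[OF y j])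
  also have "\<dots> = (\<Sum>\<alpha>\<in>{1..4*n}. 4 * ip y (I i y (X \<alpha> y)) (I j y (X \<alpha> y)))"
  proof (intro sum.cong refl)
    fix \<alpha> assume a: "\<alpha> \<in> {1..4*n}"
    show "(\<Sum>\<beta>\<in>{1..4*n}. 4 * (ip y (I i y (X \<alpha> y)) (X \<beta> y) * ip y (I j y (X \<alpha> y)) (X \<beta> y)))
        = 4 * ip y (I i y (X \<alpha> y)) (I j y (X \<alpha> y))"
      using parseval[OF y IH[OF y i Xh[OF y a]] IH[OF y j Xh[OF y a]]]
      by (simp add: sum_distrib_left)
  qed
  also have "\<dots> = (\<Sum>\<alpha>\<in>{1..4*n}. if i = j then 4 else 0)"
  proof (intro sum.cong refl)
    fix \<alpha> assume a: "\<alpha> \<in> {1..4*n}"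
    show "4 * ip y (I i y (X \<alpha> y)) (I j y (X \<alpha> y)) = (if i = j then 4 else 0)"
      using ipIJ[OF y i j Xh[OF y a]] X_orth y a by simp
  qed
  also have "\<dots> = (if i = j then 16 * real n else 0)" by simp
  finally show ?thesis .
qed

lemma det3_B: "y \<in> U \<Longrightarrow> det3 (popp_B n eta X y) = (16 * real n) ^ 3"
  by (simp add: det3_def popp_B_val power3_eq_cube)

end

context qcl
begin

lemma trace_lemma: "x \<in> U \<Longrightarrow> linear L \<Longrightarrow>
  (\<Sum>a\<in>{1..4*n+3}. theta a x \<bullet> L (X a x)) = (\<Sum>i\<in>UNIV. L (axis i 1) $ i)"
proof -
  assume x: "x \<in> U" and L: "linear L"
  have "(\<Sum>a\<in>{1..4*n+3}. theta a x \<bullet> L (X a x))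
      = (\<Sum>a\<in>{1..4*n+3}. \<Sum>i\<in>UNIV. \<Sum>k\<in>UNIV. L (axis i 1) $ k * (X a x $ i * theta a x $ k))"
  proof (intro sum.cong refl)
    fix a
    show "theta a x \<bullet> L (X a x) = (\<Sum>i\<in>UNIV. \<Sum>k\<in>UNIV. L (axis i 1) $ k * (X a x $ i * theta a x $ k))"
      apply (subst lin_bexp[OF L])
      unfolding inner_sum_right inner_scaleR_right
      by (simp add: inner_vec_def sum_distrib_left mult_ac)
  qed
  also have "\<dots> = (\<Sum>i\<in>UNIV. \<Sum>a\<in>{1..4*n+3}. \<Sum>k\<in>UNIV. L (axis i 1) $ k * (X a x $ i * theta a x $ k))"
    by (rule sum.swap)
  also have "\<dots> = (\<Sum>i\<in>UNIV. \<Sum>k\<in>UNIV. \<Sum>a\<in>{1..4*n+3}. L (axis i 1) $ k * (X a x $ i * theta a x $ k))"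
    by (intro sum.cong refl) (rule sum.swap)
  also have "\<dots> = (\<Sum>i\<in>UNIV. \<Sum>k\<in>UNIV. L (axis i 1) $ k * (\<Sum>a\<in>{1..4*n+3}. X a x $ i * theta a x $ k))"
    by (simp add: sum_distrib_left)
  also have "\<dots> = (\<Sum>i\<in>UNIV. \<Sum>k\<in>UNIV. if i = k then L (axis i 1) $ k else 0)"
    apply (intro sum.cong refl)
    apply (simp only: XT[OF x])
    by simp
  also have "\<dots> = (\<Sum>i\<in>UNIV. L (axis i 1) $ i)" by simp
  finally show ?thesis .
qed

end

context qcl
begin

lemma hasd: "F differentiable (at x) \<Longrightarrow> (F has_derivative frechet_derivative F (at x)) (at x)"
  using frechet_derivative_works by blast

lemma comp_d: "(F has_derivative F') (at x) \<Longrightarrow> ((\<lambda>y. F y $ j) has_derivative (\<lambda>h. F' h $ j)) (at x)"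
  by (rule bounded_linear.has_derivative[OF bounded_linear_vec_nth])

lemma g_diff: "x \<in> U \<Longrightarrow> \<alpha> \<in> {1..4*n+3} \<Longrightarrow> vf_apply (X \<alpha>) f differentiable (at x)"
proof -
  assume x: "x \<in> U" and a: "\<alpha> \<in> {1..4*n+3}"
  define R where "R y = (\<Sum>j\<in>UNIV. X \<alpha> y $ j * frechet_derivative f (at y) (axis j 1))" for y
  have eq: "vf_apply (X \<alpha>) f y = R y" if y: "y \<in> U" for y
    using lin_bexp[OF linear_frechet_derivative[OF f_d[OF y]], of "X \<alpha> y"]
    unfolding vf_apply_def R_def by simp
  define DX where "DX = frechet_derivative (X \<alpha>) (at x)"
  define DF where "DF j = frechet_derivative (\<lambda>y. frechet_derivative f (at y) (axis j 1)) (at x)" for j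
  have hX: "((\<lambda>y. X \<alpha> y $ j) has_derivative (\<lambda>h. DX h $ j)) (at x)" for j
    unfolding DX_def by (rule comp_d[OF hasd[OF X_d[OF a x]]])
  have hF: "((\<lambda>y. frechet_derivative f (at y) (axis j 1)) has_derivative DF j) (at x)" for j
    unfolding DF_def by (rule hasd[OF smooth_diff2[OF f_smooth x]])
  have "(R has_derivative (\<lambda>h. \<Sum>j\<in>UNIV. X \<alpha> x $ j * DF j h + DX h $ j * frechet_derivative f (at x) (axis j 1))) (at x)"
    unfolding R_def by (intro has_derivative_sum has_derivative_mult hX hF)
  then have "(vf_apply (X \<alpha>) f has_derivative (\<lambda>h. \<Sum>j\<in>UNIV. X \<alpha> x $ j * DF j h + DX h $ j * frechet_derivative f (at x) (axis j 1))) (at x)"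
    by (rule has_derivative_transform_within_open[OF _ U_open x]) (simp add: eq)
  then show ?thesis unfolding differentiable_def by blast
qed

lemma thX: "x \<in> U \<Longrightarrow> a \<in> {1..4*n+3} \<Longrightarrow>
   frechet_derivative (theta a) (at x) v \<bullet> X a x = - (theta a x \<bullet> frechet_derivative (X a) (at x) v)"
proof -
  assume x: "x \<in> U" and a: "a \<in> {1..4*n+3}"
  have "theta a x \<bullet> frechet_derivative (X a) (at x) v + frechet_derivative (theta a) (at x) v \<bullet> X a x = 0"
    by (rule zero_deriv[OF U_open x _ has_derivative_inner[OF hasd[OF th_d[OF a x]] hasd[OF X_d[OF a x]]], where c=1])
       (use theta_dual a in auto)
  then show ?thesis by simp
qed

lemma det_deriv: assumes x: "x \<in> U"
  shows "((\<lambda>y. det (\<chi> r c. theta (iota r) y $ c)) has_derivative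
     (\<lambda>v. det (\<chi> r c. theta (iota r) x $ c) *
        (\<Sum>a\<in>{1..4*n+3}. frechet_derivative (theta a) (at x) v \<bullet> X a x))) (at x)"
proof -
  define Th where "Th y = (\<chi> r c. theta (iota r) y $ c)" for y
  define Dt where "Dt a = frechet_derivative (theta a) (at x)" for a
  have ht: "(theta (iota r) has_derivative Dt (iota r)) (at x)" for r
    unfolding Dt_def by (rule hasd[OF th_d[OF iota_in x]])
  have hc: "((\<lambda>y. Th y $ r $ c) has_derivative (\<lambda>v. Dt (iota r) v $ c)) (at x)" for r c
    unfolding Th_def using comp_d[OF ht[of r], of c] by simp
  have D: "((\<lambda>y. det (Th y)) has_derivative
     (\<lambda>v. \<Sum>k\<in>UNIV. det (\<chi> i. if i = k then (\<chi> j. Dt (iota i) v $ j) else Th x $ i))) (at x)"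
    by (rule det_has_derivative[where D="\<lambda>i j v. Dt (iota i) v $ j", OF hc])
  have N: "(\<chi> r c. X (iota c) x $ r) ** Th x = mat 1"
    using Th_Xm[OF x] matrix_left_right_inverse unfolding Th_def by blast
  have E: "(\<Sum>k\<in>UNIV. det (\<chi> i. if i = k then (\<chi> j. Dt (iota i) v $ j) else Th x $ i))
      = det (Th x) * (\<Sum>a\<in>{1..4*n+3}. Dt a v \<bullet> X a x)" for v
  proof -
    have "det (\<chi> i. if i = k then (\<chi> j. Dt (iota i) v $ j) else Th x $ i)
        = det (\<chi> i. if i = k then Dt (iota k) v else Th x $ i)" for k
      by (rule arg_cong[where f=det]) (simp add: vec_eq_iff)
    also have "\<dots> k = (Dt (iota k) v \<bullet> column k (\<chi> r c. X (iota c) x $ r)) * det (Th x)" for k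
      by (rule det_row_replace[OF N])
    also have "\<dots> k = (Dt (iota k) v \<bullet> X (iota k) x) * det (Th x)" for k
      by (simp add: column_def vec_eq_iff)
    finally have "(\<Sum>k\<in>UNIV. det (\<chi> i. if i = k then (\<chi> j. Dt (iota i) v $ j) else Th x $ i))
        = det (Th x) * (\<Sum>k\<in>UNIV. Dt (iota k) v \<bullet> X (iota k) x)"
      by (simp add: sum_distrib_left mult.commute)
    also have "\<dots> = det (Th x) * (\<Sum>a\<in>{1..4*n+3}. Dt a v \<bullet> X a x)"
      using sum.reindex_bij_betw[OF iota, of "\<lambda>a. Dt a v \<bullet> X a x"] by simp
    finally show ?thesis .
  qed
  have D2: "((\<lambda>y. det (Th y)) has_derivative
     (\<lambda>v. det (Th x) * (\<Sum>a\<in>{1..4*n+3}. Dt a v \<bullet> X a x))) (at x)"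
    using D unfolding E .
  then show ?thesis unfolding Th_def Dt_def .
qed

end

context qcl
begin

lemma Kpos: "sqrt ((16 * real n) ^ 3) > 0"
  using n_pos by simp

lemma rho_eq: "y \<in> U \<Longrightarrow> popp_density n iota theta eta X y
    = \<bar>det (\<chi> r c. theta (iota r) y $ c)\<bar> * (1 / sqrt ((16 * real n) ^ 3))"
  by (simp add: popp_density_def det3_B)

lemma det_nz: "x \<in> U \<Longrightarrow> det (\<chi> r c. theta (iota r) x $ c) \<noteq> 0"
proof -
  assume x: "x \<in> U"
  have "det (\<chi> r c. theta (iota r) x $ c) * det (\<chi> r c. X (iota c) x $ r) = 1"
    using Th_Xm[OF x] det_mul[of "\<chi> r c. theta (iota r) x $ c" "\<chi> r c. X (iota c) x $ r"] by simp
  then show ?thesis by auto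
qed

lemma rho_deriv: assumes x: "x \<in> U"
  shows "(popp_density n iota theta eta X has_derivative
     (\<lambda>v. sgn (det (\<chi> r c. theta (iota r) x $ c)) * (det (\<chi> r c. theta (iota r) x $ c) *
        (\<Sum>a\<in>{1..4*n+3}. frechet_derivative (theta a) (at x) v \<bullet> X a x)) * (1 / sqrt ((16 * real n) ^ 3)))) (at x)"
proof -
  define d0 where "d0 = det (\<chi> r c. theta (iota r) x $ c)"
  define K where "K = sqrt ((16 * real n) ^ 3)"
  have habs: "(abs has_derivative (*) (sgn d0)) (at d0)"
    using has_field_derivative_imp_has_derivative[OF abs_deriv[OF det_nz[OF x]]] unfolding d0_def .
  have h1: "((\<lambda>y. \<bar>det (\<chi> r c. theta (iota r) y $ c)\<bar>) has_derivative
     (\<lambda>v. sgn d0 * (d0 * (\<Sum>a\<in>{1..4*n+3}. frechet_derivative (theta a) (at x) v \<bullet> X a x)))) (at x)"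
    using has_derivative_compose[OF det_deriv[OF x], of abs] habs unfolding d0_def by simp
  have h2: "((\<lambda>y. \<bar>det (\<chi> r c. theta (iota r) y $ c)\<bar> * (1 / K)) has_derivative
     (\<lambda>v. sgn d0 * (d0 * (\<Sum>a\<in>{1..4*n+3}. frechet_derivative (theta a) (at x) v \<bullet> X a x)) * (1 / K))) (at x)"
    using has_derivative_mult[OF h1 has_derivative_const[of "1/K"]] by simp
  have "(popp_density n iota theta eta X has_derivative
     (\<lambda>v. sgn d0 * (d0 * (\<Sum>a\<in>{1..4*n+3}. frechet_derivative (theta a) (at x) v \<bullet> X a x)) * (1 / K))) (at x)"
    by (rule has_derivative_transform_within_open[OF h2 U_open x]) (simp add: rho_eq K_def)
  then show ?thesis unfolding d0_def K_def .
qed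

end

context qcl
begin

lemma main_at: assumes x: "x \<in> U"
  shows "sublaplacian (popp_density n iota theta eta X) eta ip f x =
      - (\<Sum>\<alpha>\<in>{1..4*n}.
           vf_apply (X \<alpha>) (vf_apply (X \<alpha>) f) x
         + (\<Sum>a\<in>{1..4*n+3}. theta a x \<bullet> lie_bracket (X a) (X \<alpha>) x) * vf_apply (X \<alpha>) f x)"
proof -
  define \<rho> where "\<rho> = popp_density n iota theta eta X"
  define d0 where "d0 = det (\<chi> r c. theta (iota r) x $ c)"
  define K where "K = sqrt ((16 * real n) ^ 3)"
  define Q where "Q v = (\<Sum>a\<in>{1..4*n+3}. frechet_derivative (theta a) (at x) v \<bullet> X a x)" for v
  define D\<rho> where "D\<rho> v = sgn d0 * (d0 * Q v) * (1 / K)" for v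
  define g where "g \<alpha> = vf_apply (X \<alpha>) f" for \<alpha>
  define Dg where "Dg \<alpha> = frechet_derivative (g \<alpha>) (at x)" for \<alpha>
  define DX where "DX \<alpha> = frechet_derivative (X \<alpha>) (at x)" for \<alpha>
  define G where "G y = (\<Sum>\<alpha>\<in>{1..4*n}. g \<alpha> y *\<^sub>R X \<alpha> y)" for y
  define DG where "DG h = (\<Sum>\<alpha>\<in>{1..4*n}. g \<alpha> x *\<^sub>R DX \<alpha> h + Dg \<alpha> h *\<^sub>R X \<alpha> x)" for h
  define C where "C \<alpha> = (\<Sum>a\<in>{1..4*n+3}. theta a x \<bullet> lie_bracket (X a) (X \<alpha>) x)" for \<alpha>
  have AS: "\<alpha> \<in> {1..4*n+3}" if "\<alpha> \<in> {1..4*n}" for \<alpha> using that by auto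
  have K0: "K > 0" unfolding K_def by (rule Kpos)
  have d00: "d0 \<noteq> 0" unfolding d0_def by (rule det_nz[OF x])
  have hrho: "(\<rho> has_derivative D\<rho>) (at x)"
    unfolding \<rho>_def D\<rho>_def Q_def d0_def K_def by (rule rho_deriv[OF x])
  have rhox: "\<rho> x = \<bar>d0\<bar> * (1 / K)" unfolding \<rho>_def d0_def K_def by (rule rho_eq[OF x])
  have rho0: "\<rho> x \<noteq> 0" using rhox d00 K0 by simp
  have linrho: "linear D\<rho>" by (rule has_derivative_linear[OF hrho])
  have hG: "(G has_derivative DG) (at x)"
    unfolding G_def DG_def Dg_def DX_def g_def
    by (intro has_derivative_sum has_derivative_scaleR hasd g_diff[OF x] X_d[OF _ x] AS)
  have hi: "((\<lambda>y. \<rho> y * hgrad eta ip f y $ i) has_derivative (\<lambda>h. \<rho> x * DG h $ i + D\<rho> h * G x $ i)) (at x)" for i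
  proof -
    have "((\<lambda>y. \<rho> y * G y $ i) has_derivative (\<lambda>h. \<rho> x * DG h $ i + D\<rho> h * G x $ i)) (at x)"
      by (rule has_derivative_mult[OF hrho comp_d[OF hG]])
    then show ?thesis
      by (rule has_derivative_transform_within_open[OF _ U_open x]) (simp add: hgrad_eq G_def g_def)
  qed
  have fi: "frechet_derivative (\<lambda>y. \<rho> y * hgrad eta ip f y $ i) (at x) (axis i 1)
      = \<rho> x * DG (axis i 1) $ i + D\<rho> (axis i 1) * G x $ i" for i
    using fun_cong[OF frechet_derivative_at[OF hi[of i]], of "axis i 1"] by simp
  have div: "divergence \<rho> (hgrad eta ip f) x
      = (\<Sum>i\<in>UNIV. DG (axis i 1) $ i) + (1 / \<rho> x) * (\<Sum>i\<in>UNIV. D\<rho> (axis i 1) * G x $ i)"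
    unfolding divergence_def fi using rho0
    by (simp add: sum.distrib sum_distrib_left field_simps)
  have s1: "(\<Sum>i\<in>UNIV. D\<rho> (axis i 1) * G x $ i) = (\<Sum>\<alpha>\<in>{1..4*n}. g \<alpha> x * D\<rho> (X \<alpha> x))"
  proof -
    have "(\<Sum>i\<in>UNIV. D\<rho> (axis i 1) * G x $ i) = D\<rho> (G x)"
      using lin_bexp[OF linrho, of "G x"] by (simp add: mult.commute)
    also have "\<dots> = (\<Sum>\<alpha>\<in>{1..4*n}. g \<alpha> x * D\<rho> (X \<alpha> x))"
      unfolding G_def using linrho by (simp add: linear_sum linear_scale)
    finally show ?thesis .
  qed
  have lDX: "linear (DX \<alpha>)" if "\<alpha> \<in> {1..4*n+3}" for \<alpha>
    unfolding DX_def by (rule linear_frechet_derivative[OF X_d[OF that x]])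
  have lDg: "linear (Dg \<alpha>)" if "\<alpha> \<in> {1..4*n}" for \<alpha>
    unfolding Dg_def g_def by (rule linear_frechet_derivative[OF g_diff[OF x AS[OF that]]])
  have s2: "(\<Sum>i\<in>UNIV. DG (axis i 1) $ i)
     = (\<Sum>\<alpha>\<in>{1..4*n}. g \<alpha> x * (\<Sum>i\<in>UNIV. DX \<alpha> (axis i 1) $ i) + Dg \<alpha> (X \<alpha> x))"
  proof -
    have "(\<Sum>i\<in>UNIV. DG (axis i 1) $ i)
        = (\<Sum>i\<in>UNIV. \<Sum>\<alpha>\<in>{1..4*n}. g \<alpha> x * DX \<alpha> (axis i 1) $ i + Dg \<alpha> (axis i 1) * X \<alpha> x $ i)"
      unfolding DG_def by (simp add: sum_component)
    also have "\<dots> = (\<Sum>\<alpha>\<in>{1..4*n}. \<Sum>i\<in>UNIV. g \<alpha> x * DX \<alpha> (axis i 1) $ i + Dg \<alpha> (axis i 1) * X \<alpha> x $ i)"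
      by (rule sum.swap)
    also have "\<dots> = (\<Sum>\<alpha>\<in>{1..4*n}. g \<alpha> x * (\<Sum>i\<in>UNIV. DX \<alpha> (axis i 1) $ i) + Dg \<alpha> (X \<alpha> x))"
    proof (intro sum.cong refl)
      fix \<alpha> assume a: "\<alpha> \<in> {1..4*n}"
      have "Dg \<alpha> (X \<alpha> x) = (\<Sum>i\<in>UNIV. Dg \<alpha> (axis i 1) * X \<alpha> x $ i)"
        using lin_bexp[OF lDg[OF a], of "X \<alpha> x"] by (simp add: mult.commute)
      then show "(\<Sum>i\<in>UNIV. g \<alpha> x * DX \<alpha> (axis i 1) $ i + Dg \<alpha> (axis i 1) * X \<alpha> x $ i)
          = g \<alpha> x * (\<Sum>i\<in>UNIV. DX \<alpha> (axis i 1) $ i) + Dg \<alpha> (X \<alpha> x)"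
        by (simp add: sum.distrib sum_distrib_left)
    qed
    finally show ?thesis .
  qed
  have per: "(\<Sum>i\<in>UNIV. DX \<alpha> (axis i 1) $ i) + D\<rho> (X \<alpha> x) / \<rho> x = C \<alpha>" if a: "\<alpha> \<in> {1..4*n}" for \<alpha>
  proof -
    have "D\<rho> (X \<alpha> x) / \<rho> x = Q (X \<alpha> x)"
    proof -
      have "sgn d0 * d0 = \<bar>d0\<bar>" by (simp add: sgn_if abs_if)
      then show ?thesis unfolding D\<rho>_def rhox using d00 K0
        by (simp add: field_simps)
    qed
    also have "\<dots> = - (\<Sum>a\<in>{1..4*n+3}. theta a x \<bullet> DX a (X \<alpha> x))"
      unfolding Q_def DX_def using thX[OF x] by (simp add: sum_negf)
    finally have r: "D\<rho> (X \<alpha> x) / \<rho> x = - (\<Sum>a\<in>{1..4*n+3}. theta a x \<bullet> DX a (X \<alpha> x))" .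
    have t: "(\<Sum>i\<in>UNIV. DX \<alpha> (axis i 1) $ i) = (\<Sum>a\<in>{1..4*n+3}. theta a x \<bullet> DX \<alpha> (X a x))"
      using trace_lemma[OF x lDX[OF AS[OF a]]] by simp
    have c: "C \<alpha> = (\<Sum>a\<in>{1..4*n+3}. theta a x \<bullet> DX \<alpha> (X a x)) - (\<Sum>a\<in>{1..4*n+3}. theta a x \<bullet> DX a (X \<alpha> x))"
      unfolding C_def lie_bracket_def DX_def by (simp add: inner_diff_right sum_subtractf)
    show ?thesis using r t c by simp
  qed
  have "divergence \<rho> (hgrad eta ip f) x
      = (\<Sum>\<alpha>\<in>{1..4*n}. g \<alpha> x * (\<Sum>i\<in>UNIV. DX \<alpha> (axis i 1) $ i) + Dg \<alpha> (X \<alpha> x))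
        + (\<Sum>\<alpha>\<in>{1..4*n}. g \<alpha> x * (D\<rho> (X \<alpha> x) / \<rho> x))"
    unfolding div s1 s2 by (simp add: sum_distrib_left field_simps)
  also have "\<dots> = (\<Sum>\<alpha>\<in>{1..4*n}. Dg \<alpha> (X \<alpha> x) + C \<alpha> * g \<alpha> x)"
    unfolding sum.distrib[symmetric]
    by (intro sum.cong refl) (simp add: per[symmetric] algebra_simps)
  finally have "divergence \<rho> (hgrad eta ip f) x = (\<Sum>\<alpha>\<in>{1..4*n}. Dg \<alpha> (X \<alpha> x) + C \<alpha> * g \<alpha> x)" .
  then show ?thesis
    unfolding sublaplacian_def \<rho>_def[symmetric] by (simp add: Dg_def g_def C_def vf_apply_def)
qed

end

theorem lemma4p2:
  fixes n :: nat
    and U :: "(real^'m::finite) set"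
    and iota :: "'m \<Rightarrow> nat"
    and eta :: "nat \<Rightarrow> real^'m \<Rightarrow> real^'m"
    and ip :: "real^'m \<Rightarrow> real^'m \<Rightarrow> real^'m \<Rightarrow> real"
    and I :: "nat \<Rightarrow> real^'m \<Rightarrow> real^'m \<Rightarrow> real^'m"
    and X :: "nat \<Rightarrow> real^'m \<Rightarrow> real^'m"
    and theta :: "nat \<Rightarrow> real^'m \<Rightarrow> real^'m"
    and f :: "real^'m \<Rightarrow> real"
  assumes n_pos: "n \<ge> 1"
    and dim: "CARD('m) = 4*n+3"
    and iota: "bij_betw iota UNIV {1..4*n+3}"
    and U_open: "open U"
    (* smoothness of the local data *)
    and eta_smooth: "\<forall>i\<in>{1,2,3}. smooth_on U (eta i)"
    and X_smooth: "\<forall>a\<in>{1..4*n+3}. smooth_on U (X a)"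
    and theta_smooth: "\<forall>a\<in>{1..4*n+3}. smooth_on U (theta a)"
    and f_smooth: "smooth_on U f"
    (* ip x is an inner product on the fibre H_x *)
    and ip_bilin: "\<forall>x\<in>U. \<forall>u\<in>horiz eta x. \<forall>v\<in>horiz eta x. \<forall>w\<in>horiz eta x. \<forall>a b::real.
           ip x (a *\<^sub>R u + b *\<^sub>R v) w = a * ip x u w + b * ip x v w"
    and ip_sym: "\<forall>x\<in>U. \<forall>v\<in>horiz eta x. \<forall>w\<in>horiz eta x. ip x v w = ip x w v"
    and ip_pos: "\<forall>x\<in>U. \<forall>v\<in>horiz eta x. v \<noteq> 0 \<longrightarrow> ip x v v > 0"
    (* almost complex structures I_1, I_2, I_3 on H with quaternion relations *)
    and I_lin: "\<forall>x\<in>U. \<forall>i\<in>{1,2,3}. \<forall>v\<in>horiz eta x. \<forall>w\<in>horiz eta x. \<forall>a b::real.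
           I i x (a *\<^sub>R v + b *\<^sub>R w) = a *\<^sub>R I i x v + b *\<^sub>R I i x w"
    and I_horiz: "\<forall>x\<in>U. \<forall>i\<in>{1,2,3}. \<forall>v\<in>horiz eta x. I i x v \<in> horiz eta x"
    and I_sq: "\<forall>x\<in>U. \<forall>i\<in>{1,2,3}. \<forall>v\<in>horiz eta x. I i x (I i x v) = - v"
    and I_123: "\<forall>x\<in>U. \<forall>v\<in>horiz eta x. I 1 x (I 2 x (I 3 x v)) = - v"
    (* 2 <I_i X, Y> = d eta_i (X, Y) for horizontal X, Y *)
    and qc_compat: "\<forall>x\<in>U. \<forall>i\<in>{1,2,3}. \<forall>v\<in>horiz eta x. \<forall>w\<in>horiz eta x.
           2 * ip x (I i x v) w = d_form (eta i) x v w"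
    (* X_{4n+i} = V_i are the Reeb vector fields *)
    and reeb_dual: "\<forall>x\<in>U. \<forall>i\<in>{1,2,3}. \<forall>j\<in>{1,2,3}.
           eta i x \<bullet> X (4*n+j) x = (if i = j then 1 else 0)"
    and reeb_skew: "\<forall>x\<in>U. \<forall>i\<in>{1,2,3}. \<forall>j\<in>{1,2,3}. \<forall>v\<in>horiz eta x.
           d_form (eta j) x (X (4*n+i) x) v = - d_form (eta i) x (X (4*n+j) x) v"
    (* X_1..X_{4n} is an Sp(n)Sp(1)-frame of H *)
    and X_horiz: "\<forall>x\<in>U. \<forall>\<alpha>\<in>{1..4*n}. X \<alpha> x \<in> horiz eta x"
    and X_orth: "\<forall>x\<in>U. \<forall>\<alpha>\<in>{1..4*n}. \<forall>\<beta>\<in>{1..4*n}.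
           ip x (X \<alpha> x) (X \<beta> x) = (if \<alpha> = \<beta> then 1 else 0)"
    and X_sp: "\<forall>x\<in>U. \<forall>k<n. \<forall>i\<in>{1,2,3}. I i x (X (4*k+1) x) = X (4*k+i+1) x"
    (* theta_1..theta_{4n+3} is the dual coframe *)
    and theta_dual: "\<forall>x\<in>U. \<forall>a\<in>{1..4*n+3}. \<forall>b\<in>{1..4*n+3}.
           theta a x \<bullet> X b x = (if a = b then 1 else 0)"
  shows "\<forall>x\<in>U.
    sublaplacian (popp_density n iota theta eta X) eta ip f x =
      - (\<Sum>\<alpha>\<in>{1..4*n}.
           vf_apply (X \<alpha>) (vf_apply (X \<alpha>) f) x
         + (\<Sum>a\<in>{1..4*n+3}. theta a x \<bullet> lie_bracket (X a) (X \<alpha>) x) * vf_apply (X \<alpha>) f x)"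
  proof -
  interpret L: qcl n U iota eta ip I X theta f
    by unfold_locales (rule assms)+
  show ?thesis using L.main_at by blast
qed

end
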